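(* Let $\rho\in(-1,1)$, $\alpha>0$, $\mu>0$, $\Sigma=\begin{pmatrix}1&\rho\\\rho&1\end{pmatrix}$, and $g(t)=\frac1t\inf_{\vec x\ge(1+t,\ \alpha+\mu t)^\top}\vec x^\top\Sigma^{-1}\vec x$ for $t\ge0$. Let $t_0$ denote the unique minimiser of $g$ on $[0,\infty)$, $I$ the essential index set and $K$ the weakly essential index set associated with $\vec b=(1+t_0,\alpha+\mu t_0)^\top$, $\widehat g=g(t_0)$ and $\widetilde g$ as in the context. Then: (i) Suppose ($\mu<1$ and $\alpha<1$), or ($\mu<1$, $\alpha\ge1$, $\mu\le1/\alpha$), or ($\mu\ge1$, $\alpha<1$, $\mu\le1/\alpha$). (i.R1) If $-1<\rho<\frac{\alpha+\mu}2$: $t_0=t_0^{(0)}$, $I=\{1,2\}$, $K=\emptyset$, $\widehat g=g_0(t_0^{(0)})$, $\widetilde g=g_0''(t_0^{(0)})$. (i.R2) If $\rho=\frac{\alpha+\mu}2$: $t_0=t_0^{(0)}=t_0^{(1)}$, $I=\{1\}$, $K=\{2\}$, $\widehat g=g_0(t_0^{(0)})=g_1(t_0^{(1)})=4$, $\widetilde g=g_1''(t_0^{(1)})=2$. (i.R3) If $\frac{\alpha+\mu}2<\rho<1$: $t_0=t_0^{(1)}$, $I=\{1\}$, $K=\emptyset$, $\widehat g=g_1(t_0^{(1)})=4$, $\widetilde g=g_1''(t_0^{(1)})=2$. (ii) Suppose ($\mu\ge1$ and $\alpha\ge1$), or ($\mu<1$, $\alpha\ge1$, $\mu>1/\alpha$),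 or ($\mu\ge1$, $\alpha<1$, $\mu>1/\alpha$). (ii.R1) If $-1<\rho<\frac{\alpha+\mu}{2\alpha\mu}$: $t_0=t_0^{(0)}$, $I=\{1,2\}$, $K=\emptyset$, $\widehat g=g_0(t_0^{(0)})$, $\widetilde g=g_0''(t_0^{(0)})$. (ii.R2) If $\rho=\frac{\alpha+\mu}{2\alpha\mu}$: $t_0=t_0^{(0)}=t_0^{(2)}$, $I=\{2\}$, $K=\{1\}$, $\widehat g=g_0(t_0^{(0)})=g_2(t_0^{(2)})=4\alpha\mu$, $\widetilde g=g_2''(t_0^{(2)})=2\alpha^{-1}\mu^3$. (ii.R3) If $\frac{\alpha+\mu}{2\alpha\mu}<\rho<1$: $t_0=t_0^{(2)}$, $I=\{2\}$, $K=\emptyset$, $\widehat g=g_2(t_0^{(2)})=4\alpha\mu$, $\widetilde g=g_2''(t_0^{(2)})=2\alpha^{-1}\mu^3$.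
   Context: For positive definite $M$ and $\vec b\notin(-\infty,0]^2$, minimising $\vec x^\top M^{-1}\vec x$ over $\vec x\ge\vec b$ has a unique solution $\widetilde{\vec b}$ and a unique non-empty essential index set $I\subseteq\{1,2\}$ with $\widetilde{\vec b}_I=\vec b_I$, $M_{II}^{-1}\vec b_I>0$, and $\widetilde{\vec b}_{I^c}=M_{I^cI}M_{II}^{-1}\vec b_I\ge\vec b_{I^c}$ if $I^c\ne\emptyset$ (here $\vec a_I$, $M_{IJ}$ denote sub-vectors/sub-matrices). The weakly essential index set is $K=\{j\notin I:\Sigma_{jI}\Sigma_{II}^{-1}\vec b_I=b_j\}$ (with $M=\Sigma$). Writing $\vec\alpha=(1,\alpha)^\top$, $\vec\mu=(1,\mu)^\top$, $\widetilde g=2t_0^{-3}\vec\alpha_I^\top\Sigma_{II}^{-1}\vec\alpha_I$. Further $g_0(t)=\frac{1+\alpha^2-2\alpha\rho}{1-\rho^2}\frac1t+\frac{2(1+\alpha\mu-\rho\alpha-\rho\mu)}{1-\rho^2}+\frac{1+\mu^2-2\rho\mu}{1-\rho^2}t$, $g_1(t)=\frac1t(1+t)^2$, $g_2(t)=\frac1t(\alpha+\mu t)^2$, with unique minimisers on $[0,\infty)$ given by $t_0^{(0)}=\sqrt{\frac{1+\alpha^2-2\alpha\rho}{1+\mu^2-2\mu\rho}}$, $t_0^{(1)}=1$, $t_0^{(2)}=\alpha/\mu$. *)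

theory Defs
  imports "HOL-Analysis.Analysis"
begin

definition Sig :: "real \<Rightarrow> real^2^2" where
  "Sig \<rho> = (\<chi> i j. if i = j then 1 else \<rho>)"

definition qf :: "real^2^2 \<Rightarrow> real^2 \<Rightarrow> real" where
  "qf M x = x \<bullet> (matrix_inv M *v x)"

definition feasible :: "real^2 \<Rightarrow> real^2 \<Rightarrow> bool" where
  "feasible b x \<longleftrightarrow> (\<forall>i. b $ i \<le> x $ i)"

definition btilde :: "real^2^2 \<Rightarrow> real^2 \<Rightarrow> real^2" where
  "btilde M b = (THE x. feasible b x \<and> (\<forall>y. feasible b y \<longrightarrow> qf M x \<le> qf M y))"

text \<open>(M_II^{-1} b_I)_i for a nonempty index set I (I = UNIV = {1,2} or a singleton).\<close>
definition subinv :: "real^2^2 \<Rightarrow> 2 set \<Rightarrow> real^2 \<Rightarrow> 2 \<Rightarrow> real" where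
  "subinv M I b i =
     (if I = UNIV then (matrix_inv M *v b) $ i
      else if I = {i} then b $ i / M $ i $ i else 0)"

definition ess_cond :: "real^2^2 \<Rightarrow> real^2 \<Rightarrow> 2 set \<Rightarrow> bool" where
  "ess_cond M b I \<longleftrightarrow> I \<noteq> {} \<and>
     (\<forall>i\<in>I. btilde M b $ i = b $ i \<and> subinv M I b i > 0) \<and>
     (\<forall>j\<in>-I. btilde M b $ j = (\<Sum>k\<in>I. M $ j $ k * subinv M I b k) \<and> btilde M b $ j \<ge> b $ j)"

definition ess :: "real^2^2 \<Rightarrow> real^2 \<Rightarrow> 2 set" where
  "ess M b = (THE I. ess_cond M b I)"

definition weak_ess :: "real^2^2 \<Rightarrow> real^2 \<Rightarrow> 2 set" where
  "weak_ess M b = {j. j \<notin> ess M b \<and> (\<Sum>k\<in>ess M b. M $ j $ k * subinv M (ess M b) b k) = b $ j}"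

definition vec2 :: "real \<Rightarrow> real \<Rightarrow> real^2" where
  "vec2 a c = (\<chi> i. if i = 1 then a else c)"

definition bvec :: "real \<Rightarrow> real \<Rightarrow> real \<Rightarrow> real^2" where
  "bvec \<alpha> \<mu> t = vec2 (1 + t) (\<alpha> + \<mu> * t)"

definition gfun :: "real \<Rightarrow> real \<Rightarrow> real \<Rightarrow> real \<Rightarrow> real" where
  "gfun \<rho> \<alpha> \<mu> t = (1 / t) * Inf {qf (Sig \<rho>) x | x. feasible (bvec \<alpha> \<mu> t) x}"

text \<open>Unique minimiser of g; g(0) = +infinity in the paper, so we minimise over t > 0.\<close>
definition t0 :: "real \<Rightarrow> real \<Rightarrow> real \<Rightarrow> real" where
  "t0 \<rho> \<alpha> \<mu> = (THE t. 0 < t \<and> (\<forall>s>0. gfun \<rho> \<alpha> \<mu> t \<le> gfun \<rho> \<alpha> \<mu> s))"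

definition Iset :: "real \<Rightarrow> real \<Rightarrow> real \<Rightarrow> 2 set" where
  "Iset \<rho> \<alpha> \<mu> = ess (Sig \<rho>) (bvec \<alpha> \<mu> (t0 \<rho> \<alpha> \<mu>))"

definition Kset :: "real \<Rightarrow> real \<Rightarrow> real \<Rightarrow> 2 set" where
  "Kset \<rho> \<alpha> \<mu> = weak_ess (Sig \<rho>) (bvec \<alpha> \<mu> (t0 \<rho> \<alpha> \<mu>))"

definition ghat :: "real \<Rightarrow> real \<Rightarrow> real \<Rightarrow> real" where
  "ghat \<rho> \<alpha> \<mu> = gfun \<rho> \<alpha> \<mu> (t0 \<rho> \<alpha> \<mu>)"

definition gtilde :: "real \<Rightarrow> real \<Rightarrow> real \<Rightarrow> real" where
  "gtilde \<rho> \<alpha> \<mu> =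
     2 / (t0 \<rho> \<alpha> \<mu>) ^ 3 *
     (\<Sum>i\<in>Iset \<rho> \<alpha> \<mu>. vec2 1 \<alpha> $ i * subinv (Sig \<rho>) (Iset \<rho> \<alpha> \<mu>) (vec2 1 \<alpha>) i)"

definition g0 :: "real \<Rightarrow> real \<Rightarrow> real \<Rightarrow> real \<Rightarrow> real" where
  "g0 \<rho> \<alpha> \<mu> t =
     (1 + \<alpha>^2 - 2*\<alpha>*\<rho>) / (1 - \<rho>^2) * (1 / t)
     + 2 * (1 + \<alpha>*\<mu> - \<rho>*\<alpha> - \<rho>*\<mu>) / (1 - \<rho>^2)
     + (1 + \<mu>^2 - 2*\<rho>*\<mu>) / (1 - \<rho>^2) * t"

definition g1 :: "real \<Rightarrow> real" where
  "g1 t = (1 / t) * (1 + t)^2"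

definition g2 :: "real \<Rightarrow> real \<Rightarrow> real \<Rightarrow> real" where
  "g2 \<alpha> \<mu> t = (1 / t) * (\<alpha> + \<mu> * t)^2"

definition t00 :: "real \<Rightarrow> real \<Rightarrow> real \<Rightarrow> real" where
  "t00 \<rho> \<alpha> \<mu> = sqrt ((1 + \<alpha>^2 - 2*\<alpha>*\<rho>) / (1 + \<mu>^2 - 2*\<mu>*\<rho>))"

definition t01 :: real where "t01 = 1"

definition t02 :: "real \<Rightarrow> real \<Rightarrow> real" where
  "t02 \<alpha> \<mu> = \<alpha> / \<mu>"

end

theory Submission imports Defs begin

definition Sinv :: "real \<Rightarrow> real^2^2" where
  "Sinv \<rho> = (\<chi> i j. (if i = j then 1 else -\<rho>) / (1 - \<rho>^2))"

lemma two_ne: "(1::2) \<noteq> 2" by simp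

lemma Sig_Sinv: assumes "\<bar>\<rho>\<bar> < 1" shows "Sig \<rho> ** Sinv \<rho> = mat 1" "Sinv \<rho> ** Sig \<rho> = mat 1"
proof -
  have h: "\<rho>*\<rho> < 1" using assms by (metis abs_square_less_1 power2_eq_square)
  have "(1 - \<rho>*\<rho>)*(1 - \<rho>*\<rho>) \<noteq> 0" using h by simp
  have h3: "1 - \<rho>*\<rho> \<noteq> 0" using h by simp
  have e: "(1-\<rho>*\<rho>)*(1-\<rho>*\<rho>) = 1 + \<rho> * (\<rho> * (\<rho> * \<rho>)) - \<rho> * (\<rho> * 2)" by (simp add: algebra_simps)
  have h2: "1 + \<rho> * (\<rho> * (\<rho> * \<rho>)) \<noteq> \<rho> * (\<rho> * 2)" using e \<open>(1 - \<rho>*\<rho>)*(1 - \<rho>*\<rho>) \<noteq> 0\<close> by linarith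
  have h4: "1/(1-\<rho>*\<rho>) = 1 + \<rho>*\<rho>/(1-\<rho>*\<rho>)" using h3 by (simp add: field_simps)
  show "Sig \<rho> ** Sinv \<rho> = mat 1" "Sinv \<rho> ** Sig \<rho> = mat 1"
    by (auto simp: vec_eq_iff forall_2 matrix_matrix_mult_def Sig_def Sinv_def mat_def sum_2 field_simps power2_eq_square h2 h3 h4)
qed

lemma matrix_inv_Sig: assumes "\<bar>\<rho>\<bar> < 1" shows "matrix_inv (Sig \<rho>) = Sinv \<rho>"
proof -
  have ex: "\<exists>A'. Sig \<rho> ** A' = mat 1 \<and> A' ** Sig \<rho> = mat 1" using Sig_Sinv[OF assms] by blast
  let ?C = "matrix_inv (Sig \<rho>)"
  have "Sig \<rho> ** ?C = mat 1 \<and> ?C ** Sig \<rho> = mat 1"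
    unfolding matrix_inv_def using someI_ex[OF ex] by simp
  then have "?C = ?C ** (Sig \<rho> ** Sinv \<rho>)" using Sig_Sinv[OF assms] by simp
  also have "\<dots> = Sinv \<rho>" using \<open>Sig \<rho> ** ?C = mat 1 \<and> ?C ** Sig \<rho> = mat 1\<close> by (simp add: matrix_mul_assoc)
  finally show ?thesis .
qed

definition Qf :: "real \<Rightarrow> real \<Rightarrow> real \<Rightarrow> real" where
  "Qf \<rho> a c = (a^2 - 2*\<rho>*a*c + c^2) / (1 - \<rho>^2)"

lemma qf_Sig: assumes "\<bar>\<rho>\<bar> < 1" shows "qf (Sig \<rho>) x = Qf \<rho> (x$1) (x$2)"
  using assms by (simp add: qf_def matrix_inv_Sig inner_vec_def sum_2 matrix_vector_mult_def Sinv_def Qf_def add_divide_distrib diff_divide_distrib power2_eq_square algebra_simps)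


lemma deriv2_form:
  fixes f :: "real \<Rightarrow> real"
  assumes f: "\<And>s. s > 0 \<Longrightarrow> f s = A / s + B + C * s" and t: "t > 0"
  shows "deriv (deriv f) t = 2 * A / t ^ 3"
proof -
  have d1: "deriv f s = - A / s^2 + C" if s: "s > 0" for s
  proof -
    have "((\<lambda>s. A / s + B + C * s) has_field_derivative (- A / s^2 + C)) (at s)"
      using s by (auto intro!: derivative_eq_intros simp: power2_eq_square field_simps)
    then have "(f has_field_derivative (- A / s^2 + C)) (at s)"
      by (rule has_field_derivative_transform_within_open[where S="{0<..}"]) (use s f in auto)
    then show ?thesis by (rule DERIV_imp_deriv)
  qed
  have "((\<lambda>s. - A / s^2 + C) has_field_derivative (2 * A / t^3)) (at t)"
    using t by (auto intro!: derivative_eq_intros simp: power2_eq_square field_simps eval_nat_numeral)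
  then have "(deriv f has_field_derivative (2 * A / t^3)) (at t)"
    by (rule has_field_derivative_transform_within_open[where S="{0<..}"]) (use t d1 in auto)
  then show ?thesis by (rule DERIV_imp_deriv)
qed

lemma vec2_1[simp]: "vec2 a c $ 1 = a" by (simp add: vec2_def)
lemma vec2_2[simp]: "vec2 a c $ 2 = c" by (simp add: vec2_def)
lemma vec2_eta: "x = vec2 (x$1) (x$2)" by (simp add: vec_eq_iff forall_2)

lemma Qf_alt1: assumes "-1 < \<rho>" "\<rho> < 1" shows "Qf \<rho> a c = a^2 + (c - \<rho>*a)^2 / (1 - \<rho>^2)"
proof -
  have "1 - \<rho>^2 > 0" using assms by (simp add: abs_square_less_1)
  then show ?thesis by (simp add: Qf_def field_simps power2_eq_square)
qed

lemma Qf_alt2: assumes "-1 < \<rho>" "\<rho> < 1" shows "Qf \<rho> a c = c^2 + (a - \<rho>*c)^2 / (1 - \<rho>^2)"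
proof -
  have "1 - \<rho>^2 > 0" using assms by (simp add: abs_square_less_1)
  then show ?thesis by (simp add: Qf_def field_simps power2_eq_square)
qed

lemma Qf_ge1: assumes "-1 < \<rho>" "\<rho> < 1" shows "Qf \<rho> a c \<ge> a^2"
proof -
  have "1 - \<rho>^2 > 0" using assms by (simp add: abs_square_less_1)
  then show ?thesis using Qf_alt1[OF assms] by (simp add: divide_nonneg_pos)
qed

lemma Qf_ge2: assumes "-1 < \<rho>" "\<rho> < 1" shows "Qf \<rho> a c \<ge> c^2"
proof -
  have "1 - \<rho>^2 > 0" using assms by (simp add: abs_square_less_1)
  then show ?thesis using Qf_alt2[OF assms] by (simp add: divide_nonneg_pos)
qed

definition Vb :: "real \<Rightarrow> real \<Rightarrow> real \<Rightarrow> real" where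
  "Vb \<rho> b1 b2 = Inf {Qf \<rho> a c | a c. b1 \<le> a \<and> b2 \<le> c}"

lemma gfun_Vb: assumes "-1 < \<rho>" "\<rho> < 1"
  shows "gfun \<rho> \<alpha> \<mu> t = (1/t) * Vb \<rho> (1+t) (\<alpha>+\<mu>*t)"
proof -
  have ab: "\<bar>\<rho>\<bar> < 1" using assms by auto
  have "{qf (Sig \<rho>) x | x. feasible (bvec \<alpha> \<mu> t) x} = {Qf \<rho> a c | a c. 1+t \<le> a \<and> \<alpha>+\<mu>*t \<le> c}"
  proof (intro set_eqI iffI)
    fix z assume "z \<in> {qf (Sig \<rho>) x | x. feasible (bvec \<alpha> \<mu> t) x}"
    then obtain x where "z = qf (Sig \<rho>) x" "feasible (bvec \<alpha> \<mu> t) x" by auto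
    then have "z = Qf \<rho> (x$1) (x$2)" "1+t \<le> x$1" "\<alpha>+\<mu>*t \<le> x$2"
      by (simp_all add: qf_Sig[OF ab] feasible_def bvec_def forall_2)
    then show "z \<in> {Qf \<rho> a c | a c. 1+t \<le> a \<and> \<alpha>+\<mu>*t \<le> c}"
      by blast
  next
    fix z assume "z \<in> {Qf \<rho> a c | a c. 1+t \<le> a \<and> \<alpha>+\<mu>*t \<le> c}"
    then obtain a c where "z = Qf \<rho> a c" "1+t \<le> a" "\<alpha>+\<mu>*t \<le> c" by auto
    then show "z \<in> {qf (Sig \<rho>) x | x. feasible (bvec \<alpha> \<mu> t) x}"
    proof -
      have "z = qf (Sig \<rho>) (vec2 a c)" "feasible (bvec \<alpha> \<mu> t) (vec2 a c)"
        using \<open>z = Qf \<rho> a c\<close> \<open>1+t \<le> a\<close> \<open>\<alpha>+\<mu>*t \<le> c\<close>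
        by (simp_all add: qf_Sig[OF ab] feasible_def bvec_def forall_2)
      then show ?thesis by blast
    qed
  qed
  then show ?thesis by (simp add: gfun_def Vb_def)
qed

lemma Vb_lower:
  assumes "\<And>a c. b1 \<le> a \<Longrightarrow> b2 \<le> c \<Longrightarrow> L \<le> Qf \<rho> a c"
  shows "L \<le> Vb \<rho> b1 b2"
  unfolding Vb_def by (rule cInf_greatest) (use assms in auto)

lemma Vb_upper:
  assumes "-1 < \<rho>" "\<rho> < 1" "b1 \<le> a" "b2 \<le> c"
  shows "Vb \<rho> b1 b2 \<le> Qf \<rho> a c"
  unfolding Vb_def
proof (rule cInf_lower)
  show "bdd_below {Qf \<rho> a c |a c. b1 \<le> a \<and> b2 \<le> c}"
    by (rule bdd_belowI[of _ 0]) (use Qf_ge1[OF assms(1,2)] in \<open>auto intro: order_trans[OF zero_le_power2]\<close>)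
qed (use assms in auto)

lemma t0_eqI:
  assumes "T > 0" "\<And>s. s > 0 \<Longrightarrow> s \<noteq> T \<Longrightarrow> gfun \<rho> \<alpha> \<mu> T < gfun \<rho> \<alpha> \<mu> s"
  shows "t0 \<rho> \<alpha> \<mu> = T"
  unfolding t0_def
proof (rule the_equality)
  show "0 < T \<and> (\<forall>s>0. gfun \<rho> \<alpha> \<mu> T \<le> gfun \<rho> \<alpha> \<mu> s)"
    using assms by (metis less_le_not_le nle_le)
  fix t assume "0 < t \<and> (\<forall>s>0. gfun \<rho> \<alpha> \<mu> t \<le> gfun \<rho> \<alpha> \<mu> s)"
  then show "t = T" using assms by (meson linorder_not_le)
qed

lemma btilde_eqI:
  assumes "feasible b x" "\<And>y. feasible b y \<Longrightarrow> qf M x \<le> qf M y"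
    "\<And>y. feasible b y \<Longrightarrow> qf M y \<le> qf M x \<Longrightarrow> y = x"
  shows "btilde M b = x"
  unfolding btilde_def
  by (rule the_equality) (use assms in auto)

lemma sets2: "(J::2 set) = {} \<or> J = {1} \<or> J = {2} \<or> J = UNIV"
proof (cases "1 \<in> J"; cases "2 \<in> J")
  assume "1 \<in> J" "2 \<in> J" then have "J = UNIV" by (metis UNIV_eq_I exhaust_2)
  then show ?thesis by blast
next
  assume "1 \<in> J" "2 \<notin> J" then have "J = {1}" by (intro set_eqI) (metis empty_iff singletonD singletonI exhaust_2)
  then show ?thesis by blast
next
  assume "1 \<notin> J" "2 \<in> J" then have "J = {2}" by (intro set_eqI) (metis empty_iff singletonD singletonI exhaust_2)
  then show ?thesis by blast
next
  assume "1 \<notin> J" "2 \<notin> J" then have "J = {}" by (intro set_eqI) (metis empty_iff singletonD singletonI exhaust_2)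
  then show ?thesis by blast
qed

lemma ess_eqI:
  assumes "ess_cond M b I" "\<And>J. ess_cond M b J \<Longrightarrow> J = I"
  shows "ess M b = I"
  unfolding ess_def by (rule the_equality[where P="ess_cond M b", OF assms(1) assms(2)])

lemma compl1: "-{1::2} = {2}" by (simp add: Compl_eq_Diff_UNIV UNIV_2)
lemma compl2: "-{2::2} = {1}" by (auto simp add: Compl_eq_Diff_UNIV UNIV_2)
lemma ne1: "{1::2} \<noteq> UNIV"
proof
  assume "{1::2} = UNIV" then have "(2::2) \<in> {1}" by simp
  then show False by simp
qed
lemma ne2: "{2::2} \<noteq> UNIV"
proof
  assume "{2::2} = UNIV" then have "(1::2) \<in> {2}" by simp
  then show False by simp
qed
lemma ne12: "{1::2} \<noteq> {2}" by simp
lemma univ12: "{1,2::2} = UNIV" by (simp add: UNIV_2)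


lemma subinv_1: "subinv M {1} b 1 = b$1 / M$1$1" by (simp add: subinv_def ne1)
lemma subinv_2: "subinv M {2} b 2 = b$2 / M$2$2" by (simp add: subinv_def ne2)
lemma subinv_U: "subinv M UNIV b i = (matrix_inv M *v b) $ i" by (simp add: subinv_def)
lemma Sig_11[simp]: "Sig \<rho> $ 1 $ 1 = 1" and Sig_22[simp]: "Sig \<rho> $ 2 $ 2 = 1"
  and Sig_12[simp]: "Sig \<rho> $ 1 $ 2 = \<rho>" and Sig_21[simp]: "Sig \<rho> $ 2 $ 1 = \<rho>"
  by (simp_all add: Sig_def)
lemma Sinv_mult: assumes "-1 < \<rho>" "\<rho> < 1"
  shows "(matrix_inv (Sig \<rho>) *v x) $ 1 = (x$1 - \<rho> * x$2) / (1 - \<rho>^2)"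
        "(matrix_inv (Sig \<rho>) *v x) $ 2 = (x$2 - \<rho> * x$1) / (1 - \<rho>^2)"
proof -
  have ab: "\<bar>\<rho>\<bar> < 1" using assms by auto
  show "(matrix_inv (Sig \<rho>) *v x) $ 1 = (x$1 - \<rho> * x$2) / (1 - \<rho>^2)"
       "(matrix_inv (Sig \<rho>) *v x) $ 2 = (x$2 - \<rho> * x$1) / (1 - \<rho>^2)"
    by (simp_all add: matrix_inv_Sig[OF ab] matrix_vector_mult_def sum_2 Sinv_def diff_divide_distrib)
qed

lemma rho_sq: fixes \<rho> :: real assumes "-1 < \<rho>" "\<rho> < 1" shows "1 - \<rho>^2 > 0"
  using assms by (simp add: abs_square_less_1)

lemma case1:
  assumes r: "-1 < \<rho>" "\<rho> < 1" and a: "0 < \<alpha>" "0 < \<mu>" and h: "\<alpha> + \<mu> \<le> 2 * \<rho>"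
  shows "t0 \<rho> \<alpha> \<mu> = 1 \<and> ghat \<rho> \<alpha> \<mu> = 4 \<and> Iset \<rho> \<alpha> \<mu> = {1} \<and>
         Kset \<rho> \<alpha> \<mu> = (if \<alpha> + \<mu> = 2 * \<rho> then {2} else {}) \<and> gtilde \<rho> \<alpha> \<mu> = 2"
proof -
  have ab: "\<bar>\<rho>\<bar> < 1" using r by auto
  have pos: "1 - \<rho>^2 > 0" by (rule rho_sq[OF r])
  have Q4: "Qf \<rho> 2 (2*\<rho>) = 4" using Qf_alt1[OF r, of 2 "2*\<rho>"] by simp
  have lowQ: "(1+s)^2 \<le> Qf \<rho> x y" if "1 + s \<le> x" "0 \<le> s" for s x y
  proof -
    have "(1+s)^2 \<le> x^2" using that by (intro power_mono) auto
    then show ?thesis using Qf_ge1[OF r, of x y] by linarith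
  qed
  have V1: "Vb \<rho> 2 (\<alpha>+\<mu>) = 4"
  proof (rule antisym)
    show "Vb \<rho> 2 (\<alpha>+\<mu>) \<le> 4" using Vb_upper[OF r, of 2 2 "\<alpha>+\<mu>" "2*\<rho>"] h Q4 by simp
    show "4 \<le> Vb \<rho> 2 (\<alpha>+\<mu>)" using lowQ[of 1] by (intro Vb_lower) (auto simp: eval_nat_numeral)
  qed
  have g1: "gfun \<rho> \<alpha> \<mu> 1 = 4" using V1 by (simp add: gfun_Vb[OF r] one_add_one)
  have glow: "gfun \<rho> \<alpha> \<mu> s \<ge> (1+s)^2 / s" if "s > 0" for s
  proof -
    have "(1+s)^2 \<le> Vb \<rho> (1+s) (\<alpha>+\<mu> * s)" using lowQ[of s] that by (intro Vb_lower) auto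
    then show ?thesis using that by (simp add: gfun_Vb[OF r] divide_right_mono)
  qed
  have t0: "t0 \<rho> \<alpha> \<mu> = 1"
  proof (rule t0_eqI)
    fix s :: real assume s: "s > 0" "s \<noteq> 1"
    have "(1 - s)^2 > 0" using s by simp
    then have "4 * s < (1+s)^2" by (simp add: power2_eq_square algebra_simps)
    then have "4 < (1+s)^2 / s" using s by (simp add: field_simps)
    then show "gfun \<rho> \<alpha> \<mu> 1 < gfun \<rho> \<alpha> \<mu> s" using g1 glow[OF s(1)] by linarith
  qed simp
  have bv: "bvec \<alpha> \<mu> (t0 \<rho> \<alpha> \<mu>) = vec2 2 (\<alpha>+\<mu>)" by (simp add: t0 bvec_def one_add_one)
  have bt: "btilde (Sig \<rho>) (vec2 2 (\<alpha>+\<mu>)) = vec2 2 (2*\<rho>)"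
  proof (rule btilde_eqI)
    show "feasible (vec2 2 (\<alpha> + \<mu>)) (vec2 2 (2 * \<rho>))" using h by (simp add: feasible_def forall_2)
  next
    fix y assume "feasible (vec2 2 (\<alpha> + \<mu>)) y"
    then have y: "2 \<le> y$1" "\<alpha>+\<mu> \<le> y$2" by (simp_all add: feasible_def forall_2)
    have "4 \<le> Qf \<rho> (y$1) (y$2)" using lowQ[of 1 "y$1" "y$2"] y by (simp add: one_add_one)
    then show "qf (Sig \<rho>) (vec2 2 (2 * \<rho>)) \<le> qf (Sig \<rho>) y" by (simp add: qf_Sig[OF ab] Q4)
  next
    fix y assume "feasible (vec2 2 (\<alpha> + \<mu>)) y" "qf (Sig \<rho>) y \<le> qf (Sig \<rho>) (vec2 2 (2 * \<rho>))"
    then have y: "2 \<le> y$1" and le: "Qf \<rho> (y$1) (y$2) \<le> 4"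
      by (simp_all add: feasible_def forall_2 qf_Sig[OF ab] Q4)
    have nn: "0 \<le> (y$2 - \<rho>*y$1)^2 / (1 - \<rho>^2)" using pos by simp
    have "(y$1)^2 \<le> 4" using le Qf_alt1[OF r, of "y$1" "y$2"] nn by linarith
    moreover have "4 \<le> (y$1)^2" using y power_mono[of 2 "y$1" 2] by simp
    ultimately have "(y$1)^2 = 4" by simp
    then have "(y$1 - 2) * (y$1 + 2) = 0" by (simp add: algebra_simps power2_eq_square)
    then have y1: "y$1 = 2" using y by simp
    have "(y$2 - \<rho>*y$1)^2 / (1 - \<rho>^2) \<le> 0" using le Qf_alt1[OF r, of "y$1" "y$2"] y1 by simp
    then have "(y$2 - \<rho>*y$1)^2 \<le> 0" using pos by (simp add: divide_le_0_iff)
    then have "y$2 = \<rho> * y$1" by simp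
    then show "y = vec2 2 (2 * \<rho>)" using y1 by (simp add: vec_eq_iff forall_2)
  qed
  let ?b = "vec2 2 (\<alpha>+\<mu>)"
  have c1: "ess_cond (Sig \<rho>) ?b {1}"
    unfolding ess_cond_def using h by (simp add: bt subinv_1 compl1)
  have ess: "ess (Sig \<rho>) ?b = {1}"
  proof (rule ess_eqI[OF c1])
    fix J assume J: "ess_cond (Sig \<rho>) ?b J"
    have "J \<noteq> {}" using J by (simp add: ess_cond_def)
    moreover have "J \<noteq> {2}"
    proof
      assume "J = {2}"
      then have "2 * \<rho> = \<alpha> + \<mu>" "2 = \<rho> * ((\<alpha> + \<mu>))"
        using J by (simp_all add: ess_cond_def bt subinv_2 compl2)
      then have "2 = \<rho> * (2 * \<rho>)" by metis
      then have "\<rho> * \<rho> = 1" by simp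
      then show False using pos by (simp add: power2_eq_square)
    qed
    moreover have "J \<noteq> UNIV"
    proof
      assume "J = UNIV"
      then have "subinv (Sig \<rho>) UNIV ?b 2 > 0" using J by (simp add: ess_cond_def)
      then have "(\<alpha> + \<mu> - \<rho> * 2) / (1 - \<rho>^2) > 0" by (simp add: subinv_U Sinv_mult[OF r])
      then have "\<alpha> + \<mu> - \<rho> * 2 > 0" using pos by (simp add: zero_less_divide_iff)
      then show False using h by simp
    qed
    ultimately show "J = {1}" using sets2[of J] by blast
  qed
  have I: "Iset \<rho> \<alpha> \<mu> = {1}" by (simp add: Iset_def bv ess)
  have K: "Kset \<rho> \<alpha> \<mu> = (if \<alpha> + \<mu> = 2 * \<rho> then {2} else {})"
  proof -
    have "Kset \<rho> \<alpha> \<mu> = {j. j \<noteq> 1 \<and> \<rho> * 2 = ?b $ j} \<union> {j. j \<noteq> 1 \<and> j = 2 \<and> False}"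
      unfolding Kset_def bv weak_ess_def ess
      apply (rule set_eqI)
      subgoal for j using exhaust_2[of j] by (auto simp: subinv_1)
      done
    also have "\<dots> = (if \<alpha> + \<mu> = 2 * \<rho> then {2} else {})"
      apply (rule set_eqI)
      subgoal for j using exhaust_2[of j] by auto
      done
    finally show ?thesis .
  qed
  have gt: "gtilde \<rho> \<alpha> \<mu> = 2" by (simp add: gtilde_def I t0 subinv_1)
  have gh: "ghat \<rho> \<alpha> \<mu> = 4" by (simp add: ghat_def t0 g1)
  show ?thesis using t0 gh I K gt by blast
qed


lemma case2:
  assumes r: "-1 < \<rho>" "\<rho> < 1" and a: "0 < \<alpha>" "0 < \<mu>" and h: "\<alpha> + \<mu> \<le> 2 * \<alpha> * \<mu> * \<rho>"
  shows "t0 \<rho> \<alpha> \<mu> = \<alpha> / \<mu> \<and> ghat \<rho> \<alpha> \<mu> = 4 * \<alpha> * \<mu> \<and> Iset \<rho> \<alpha> \<mu> = {2} \<and>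
         Kset \<rho> \<alpha> \<mu> = (if \<alpha> + \<mu> = 2 * \<alpha> * \<mu> * \<rho> then {1} else {}) \<and>
         gtilde \<rho> \<alpha> \<mu> = 2 * \<mu> ^ 3 / \<alpha>"
proof -
  have ab: "\<bar>\<rho>\<bar> < 1" using r by auto
  have pos: "1 - \<rho>^2 > 0" by (rule rho_sq[OF r])
  let ?T = "\<alpha> / \<mu>"
  have T: "?T > 0" using a by simp
  have hb: "1 + ?T \<le> 2 * \<alpha> * \<rho>"
  proof -
    have e: "1 + ?T = (\<alpha> + \<mu>) / \<mu>" using a by (simp add: field_simps)
    have "(\<alpha> + \<mu>) / \<mu> \<le> 2 * \<alpha> * \<rho>"
      using a h by (simp add: pos_divide_le_eq mult_ac)
    then show ?thesis using e by simp
  qed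
  have b2: "\<alpha> + \<mu> * ?T = 2 * \<alpha>" using a by simp
  have Q4: "Qf \<rho> (2*\<alpha>*\<rho>) (2*\<alpha>) = 4 * \<alpha>^2"
    using Qf_alt2[OF r, of "2*\<alpha>*\<rho>" "2*\<alpha>"] by (simp add: power2_eq_square)
  have lowQ: "(\<alpha> + \<mu> * s)^2 \<le> Qf \<rho> x y" if "\<alpha> + \<mu> * s \<le> y" "0 \<le> s" for s x y
  proof -
    have "(\<alpha> + \<mu> * s)^2 \<le> y^2" using that a by (intro power_mono) auto
    then show ?thesis using Qf_ge2[OF r, where a=x and c=y] by linarith
  qed
  have V1: "Vb \<rho> (1 + ?T) (2*\<alpha>) = 4 * \<alpha>^2"
  proof (rule antisym)
    show "Vb \<rho> (1 + ?T) (2*\<alpha>) \<le> 4 * \<alpha>^2" using Vb_upper[OF r, of "1 + ?T" "2*\<alpha>*\<rho>" "2*\<alpha>" "2*\<alpha>"] hb Q4 by simp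
    have "(2*\<alpha>)^2 \<le> Qf \<rho> x y" if "2*\<alpha> \<le> y" for x y using lowQ[of ?T y x] that b2 T by simp
    then show "4 * \<alpha>^2 \<le> Vb \<rho> (1 + ?T) (2*\<alpha>)" by (intro Vb_lower) (auto simp: power2_eq_square)
  qed
  have g1: "gfun \<rho> \<alpha> \<mu> ?T = 4 * \<alpha> * \<mu>"
    using V1 b2 a by (simp add: gfun_Vb[OF r] power2_eq_square)
  have glow: "gfun \<rho> \<alpha> \<mu> s \<ge> (\<alpha> + \<mu> * s)^2 / s" if "s > 0" for s
  proof -
    have "(\<alpha> + \<mu> * s)^2 \<le> Vb \<rho> (1+s) (\<alpha> + \<mu> * s)" using lowQ[of s] that by (intro Vb_lower) auto
    then show ?thesis using that by (simp add: gfun_Vb[OF r] divide_right_mono)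
  qed
  have t0: "t0 \<rho> \<alpha> \<mu> = ?T"
  proof (rule t0_eqI[OF T])
    fix s :: real assume s: "s > 0" "s \<noteq> ?T"
    have "\<alpha> - \<mu> * s \<noteq> 0" using s a by (auto simp: field_simps)
    then have "(\<alpha> - \<mu> * s)^2 > 0" by simp
    then have "4 * \<alpha> * \<mu> * s < (\<alpha> + \<mu> * s)^2" by (simp add: power2_eq_square algebra_simps)
    then have "4 * \<alpha> * \<mu> < (\<alpha> + \<mu> * s)^2 / s" using s by (simp add: field_simps)
    then show "gfun \<rho> \<alpha> \<mu> ?T < gfun \<rho> \<alpha> \<mu> s" using g1 glow[OF s(1)] by linarith
  qed
  have bv: "bvec \<alpha> \<mu> (t0 \<rho> \<alpha> \<mu>) = vec2 (1 + ?T) (2*\<alpha>)" using b2 by (simp add: t0 bvec_def)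
  let ?b = "vec2 (1 + ?T) (2*\<alpha>)"
  have bt: "btilde (Sig \<rho>) ?b = vec2 (2*\<alpha>*\<rho>) (2*\<alpha>)"
  proof (rule btilde_eqI)
    show "feasible ?b (vec2 (2*\<alpha>*\<rho>) (2*\<alpha>))" using hb by (simp add: feasible_def forall_2)
  next
    fix y assume "feasible ?b y"
    then have y: "2*\<alpha> \<le> y$2" by (simp_all add: feasible_def forall_2)
    have "(2*\<alpha>)^2 \<le> Qf \<rho> (y$1) (y$2)" using lowQ[of ?T "y$2" "y$1"] y b2 T by simp
    then show "qf (Sig \<rho>) (vec2 (2*\<alpha>*\<rho>) (2*\<alpha>)) \<le> qf (Sig \<rho>) y" by (simp add: qf_Sig[OF ab] Q4 power2_eq_square)
  next
    fix y assume "feasible ?b y" "qf (Sig \<rho>) y \<le> qf (Sig \<rho>) (vec2 (2*\<alpha>*\<rho>) (2*\<alpha>))"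
    then have y: "2*\<alpha> \<le> y$2" and le: "Qf \<rho> (y$1) (y$2) \<le> 4 * \<alpha>^2"
      by (simp_all add: feasible_def forall_2 qf_Sig[OF ab] Q4)
    have nn: "0 \<le> (y$1 - \<rho>*y$2)^2 / (1 - \<rho>^2)" using pos by simp
    have "(y$2)^2 \<le> (2*\<alpha>)^2" using le Qf_alt2[OF r, of "y$1" "y$2"] nn by (simp add: power2_eq_square)
    moreover have "(2*\<alpha>)^2 \<le> (y$2)^2" using y a power_mono[of "2*\<alpha>" "y$2" 2] by simp
    ultimately have "(y$2)^2 = (2*\<alpha>)^2" by simp
    then have "(y$2 - 2*\<alpha>) * (y$2 + 2*\<alpha>) = 0" by (simp add: algebra_simps power2_eq_square)
    then have y2: "y$2 = 2*\<alpha>" using y a by simp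
    have "(y$1 - \<rho>*y$2)^2 / (1 - \<rho>^2) \<le> 0" using le Qf_alt2[OF r, of "y$1" "y$2"] y2 by (simp add: power2_eq_square)
    then have "(y$1 - \<rho>*y$2)^2 \<le> 0" using pos by (simp add: divide_le_0_iff)
    then have "y$1 = \<rho> * y$2" by simp
    then show "y = vec2 (2*\<alpha>*\<rho>) (2*\<alpha>)" using y2 by (simp add: vec_eq_iff forall_2)
  qed
  have c1: "ess_cond (Sig \<rho>) ?b {2}"
    unfolding ess_cond_def using hb a by (simp add: bt subinv_2 compl2)
  have ess: "ess (Sig \<rho>) ?b = {2}"
  proof (rule ess_eqI[OF c1])
    fix J assume J: "ess_cond (Sig \<rho>) ?b J"
    have "J \<noteq> {}" using J by (simp add: ess_cond_def)
    moreover have "J \<noteq> {1}"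
    proof
      assume "J = {1}"
      then have e: "ess_cond (Sig \<rho>) ?b {1}" using J by simp
      have e1: "2 * \<alpha> * \<rho> = 1 + ?T" using e by (simp add: ess_cond_def bt subinv_1)
      have "\<forall>j\<in>-{1}. btilde (Sig \<rho>) ?b $ j = (\<Sum>k\<in>{1}. Sig \<rho> $ j $ k * subinv (Sig \<rho>) {1} ?b k)"
        using e unfolding ess_cond_def by blast
      then have "btilde (Sig \<rho>) ?b $ 2 = (\<Sum>k\<in>{1}. Sig \<rho> $ 2 $ k * subinv (Sig \<rho>) {1} ?b k)"
        by (simp add: compl1)
      then have e2: "2 * \<alpha> = \<rho> * (1 + ?T)" by (simp add: bt subinv_1)
      have "2 * \<alpha> = \<rho> * (2 * \<alpha> * \<rho>)" using e1 e2 by metis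
      then have "2 * \<alpha> * 1 = 2 * \<alpha> * (\<rho> * \<rho>)" by (simp add: mult_ac)
      then have "\<rho> * \<rho> = 1" using a by (metis mult_left_cancel mult_eq_0_iff zero_neq_numeral less_irrefl)
      then show False using pos by (simp add: power2_eq_square)
    qed
    moreover have "J \<noteq> UNIV"
    proof
      assume "J = UNIV"
      then have "subinv (Sig \<rho>) UNIV ?b 1 > 0" using J by (simp add: ess_cond_def)
      then have "(1 + ?T - \<rho> * (2*\<alpha>)) / (1 - \<rho>^2) > 0" by (simp add: subinv_U Sinv_mult[OF r])
      then have "1 + ?T - \<rho> * (2*\<alpha>) > 0" using pos by (simp add: zero_less_divide_iff)
      then show False using hb by (simp add: mult_ac)
    qed
    ultimately show "J = {2}" using sets2[of J] by blast
  qed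
  have I: "Iset \<rho> \<alpha> \<mu> = {2}" by (simp add: Iset_def bv ess)
  have eqv: "(1 + ?T = 2 * \<alpha> * \<rho>) \<longleftrightarrow> (\<alpha> + \<mu> = 2 * \<alpha> * \<mu> * \<rho>)"
    using a by (simp add: field_simps)
  have K: "Kset \<rho> \<alpha> \<mu> = (if \<alpha> + \<mu> = 2 * \<alpha> * \<mu> * \<rho> then {1} else {})"
  proof -
    have "Kset \<rho> \<alpha> \<mu> = {j. j \<noteq> 2 \<and> \<rho> * (2*\<alpha>) = ?b $ j}"
      unfolding Kset_def bv weak_ess_def ess
      apply (rule set_eqI)
      subgoal for j using exhaust_2[of j] by (auto simp: subinv_2)
      done
    also have "\<dots> = (if 1 + ?T = 2 * \<alpha> * \<rho> then {1} else {})"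
      apply (rule set_eqI)
      subgoal for j using exhaust_2[of j] by (auto simp: algebra_simps)
      done
    finally show ?thesis using eqv by simp
  qed
  have gt: "gtilde \<rho> \<alpha> \<mu> = 2 * \<mu> ^ 3 / \<alpha>"
    using a by (simp add: gtilde_def I t0 subinv_2 field_simps power3_eq_cube power2_eq_square)
  have gh: "ghat \<rho> \<alpha> \<mu> = 4 * \<alpha> * \<mu>" by (simp add: ghat_def t0 g1)
  show ?thesis using t0 gh I K gt by blast
qed


lemma P_ident:
  fixes \<rho> \<alpha> \<mu> T t yy zz :: real
  shows "yy^2 - 2*\<rho>*yy*zz + zz^2 =
    2 * t * (((1+T) - \<rho>*(\<alpha>+\<mu>*T)) + \<mu> * ((\<alpha>+\<mu>*T) - \<rho>*(1+T)))
    + 2 * (((1+T) - \<rho>*(\<alpha>+\<mu>*T)) * (yy - (1+t)) + ((\<alpha>+\<mu>*T) - \<rho>*(1+T)) * (zz - (\<alpha>+\<mu>*t)))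
    + ((yy-(1+T))^2 - 2*\<rho>*(yy-(1+T))*(zz-(\<alpha>+\<mu>*T)) + (zz-(\<alpha>+\<mu>*T))^2)
    + ((1 + \<alpha>^2 - 2*\<alpha>*\<rho>) - (1 + \<mu>^2 - 2*\<mu>*\<rho>) * T^2)"
  by (simp add: algebra_simps power2_eq_square)

lemma min_bound:
  fixes w d c :: real
  assumes "0 \<le> w" "d \<noteq> 0" "0 < c"
  shows "min (d^2/4) (c * \<bar>d\<bar>) \<le> (w + d)^2 + 2 * c * w"
proof (cases "w \<ge> \<bar>d\<bar>/2")
  case True
  then have "c * \<bar>d\<bar> \<le> 2 * c * w" using assms by (simp add: mult_left_mono[of "\<bar>d\<bar>" "2*w" c] mult_ac)
  then show ?thesis using assms by (smt (verit) zero_le_power2)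
next
  case False
  then have "\<bar>d\<bar>/2 \<le> \<bar>w + d\<bar>" using assms by linarith
  then have "(\<bar>d\<bar>/2)^2 \<le> \<bar>w + d\<bar>^2" by (intro power_mono) auto
  then have "d^2/4 \<le> (w+d)^2" by (simp add: power_divide)
  then show ?thesis using assms by (smt (verit) mult_nonneg_nonneg)
qed


lemma id1: fixes \<rho> \<alpha> \<mu> :: real shows
  "(1 + \<alpha>^2 - 2*\<alpha>*\<rho>) * (\<mu>-\<rho>)^2 - (1 + \<mu>^2 - 2*\<mu>*\<rho>) * (\<rho>-\<alpha>)^2 = (1-\<rho>^2)*(\<mu>-\<alpha>)*(\<mu>+\<alpha>-2*\<rho>)"
  by (simp add: algebra_simps power2_eq_square)
lemma id2: fixes \<rho> \<alpha> \<mu> :: real shows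
  "(1 + \<alpha>^2 - 2*\<alpha>*\<rho>) * (1-\<rho>*\<mu>)^2 - (1 + \<mu>^2 - 2*\<mu>*\<rho>) * (1-\<rho>*\<alpha>)^2 = (1-\<rho>^2)*(\<alpha>-\<mu>)*(\<alpha>+\<mu>-2*\<rho>*\<alpha>*\<mu>)"
  by (simp add: algebra_simps power2_eq_square)

lemma sq_less_lemma:
  fixes x y s k :: real
  assumes "0 \<le> x" "0 \<le> y" "0 \<le> s" "0 \<le> k" "s^2 * x < k^2 * y"
  shows "s * sqrt x < k * sqrt y"
proof (rule power2_less_imp_less)
  show "(s * sqrt x)^2 < (k * sqrt y)^2" using assms by (simp add: power_mult_distrib)
qed (use assms in simp)

lemma upos:
  fixes \<rho> \<alpha> \<mu> :: real
  assumes r: "-1 < \<rho>" "\<rho> < 1" and a: "0 < \<alpha>" "0 < \<mu>"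
    and h1: "2*\<rho> < \<alpha> + \<mu>" and h2: "2*\<alpha>*\<mu>*\<rho> < \<alpha> + \<mu>"
  defines "A \<equiv> 1 + \<alpha>^2 - 2*\<alpha>*\<rho>" and "C \<equiv> 1 + \<mu>^2 - 2*\<mu>*\<rho>"
  defines "T \<equiv> sqrt (A / C)"
  shows "A > 0" "C > 0" "T > 0" "C * T^2 = A"
    "(1+T) - \<rho>*(\<alpha>+\<mu>*T) > 0" "(\<alpha>+\<mu>*T) - \<rho>*(1+T) > 0"
proof -
  have D: "1 - \<rho>^2 > 0" by (rule rho_sq[OF r])
  have eA: "A = (1 - \<rho>^2) + (\<alpha>-\<rho>)^2" unfolding A_def by (simp add: algebra_simps power2_eq_square)
  have eC: "C = (1 - \<rho>^2) + (\<mu>-\<rho>)^2" unfolding C_def by (simp add: algebra_simps power2_eq_square)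
  show A: "A > 0" using eA D by (smt (verit) zero_le_power2)
  show C: "C > 0" using eC D by (smt (verit) zero_le_power2)
  show T: "T > 0" unfolding T_def using A C by simp
  show "C * T^2 = A" unfolding T_def using A C by simp
  define sA where "sA = sqrt A"
  define sC where "sC = sqrt C"
  have sA: "sA > 0" "sA^2 = A" using A by (simp_all add: sA_def)
  have sC: "sC > 0" "sC^2 = C" using C by (simp_all add: sC_def)
  have Te: "T = sA / sC" unfolding T_def sA_def sC_def by (simp add: real_sqrt_divide)
  have "sC * (\<alpha> - \<rho>) + sA * (\<mu> - \<rho>) > 0"
  proof -
    consider "\<rho> \<le> \<alpha>" "\<rho> \<le> \<mu>" | "\<alpha> < \<rho>" | "\<mu> < \<rho>" by linarith
    then show ?thesis
    proof cases
      case 1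
      show ?thesis
      proof (cases "\<rho> < \<alpha>")
        case True then show ?thesis using 1 sA sC by (simp add: add_pos_nonneg)
      next
        case False then have "\<rho> < \<mu>" "\<alpha> = \<rho>" using 1 h1 by auto
        then show ?thesis using sA sC by simp
      qed
    next
      case 2
      then have m: "\<rho> < \<mu>" using h1 by linarith
      have "(1-\<rho>^2)*(\<mu>-\<alpha>)*(\<mu>+\<alpha>-2*\<rho>) > 0"
        using D m 2 h1 by (intro mult_pos_pos) auto
      then have "(\<rho>-\<alpha>)^2 * C < (\<mu>-\<rho>)^2 * A"
        using id1[of \<alpha> \<rho> \<mu>] unfolding A_def C_def by (simp add: mult.commute)
      then have "(\<rho>-\<alpha>) * sqrt C < (\<mu>-\<rho>) * sqrt A"
        using A C 2 m by (intro sq_less_lemma) auto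
      then show ?thesis unfolding sA_def sC_def by (simp add: algebra_simps)
    next
      case 3
      then have m: "\<rho> < \<alpha>" using h1 by linarith
      have "(1-\<rho>^2)*(\<alpha>-\<mu>)*(\<mu>+\<alpha>-2*\<rho>) > 0"
        using D m 3 h1 by (intro mult_pos_pos) auto
      moreover have "(\<mu>-\<rho>)^2 = (\<rho>-\<mu>)^2" "(\<rho>-\<alpha>)^2 = (\<alpha>-\<rho>)^2" by (simp_all add: power2_commute)
      ultimately have "(\<rho>-\<mu>)^2 * A < (\<alpha>-\<rho>)^2 * C"
        using id1[of \<alpha> \<rho> \<mu>] unfolding A_def C_def by (simp add: mult.commute algebra_simps)
      then have "(\<rho>-\<mu>) * sqrt A < (\<alpha>-\<rho>) * sqrt C"
        using A C 3 m by (intro sq_less_lemma) auto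
      then show ?thesis unfolding sA_def sC_def by (simp add: algebra_simps)
    qed
  qed
  moreover have "sC * ((\<alpha>+\<mu>*T) - \<rho>*(1+T)) = sC * (\<alpha> - \<rho>) + (sC * T) * (\<mu> - \<rho>)"
    by (simp add: algebra_simps)
  moreover have "sC * T = sA" using Te sC by simp
  ultimately have "sC * ((\<alpha>+\<mu>*T) - \<rho>*(1+T)) > 0" by simp
  then show "(\<alpha>+\<mu>*T) - \<rho>*(1+T) > 0" using sC by (simp add: zero_less_mult_iff)
  have "sC * (1 - \<rho>*\<alpha>) + sA * (1 - \<rho>*\<mu>) > 0"
  proof -
    consider "\<rho>*\<alpha> \<le> 1" "\<rho>*\<mu> \<le> 1" | "1 < \<rho>*\<alpha>" | "1 < \<rho>*\<mu>" by linarith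
    then show ?thesis
    proof cases
      case 1
      show ?thesis
      proof (cases "\<rho>*\<alpha> < 1")
        case True then show ?thesis using 1 sA sC by (simp add: add_pos_nonneg)
      next
        case False
        then have e: "\<rho>*\<alpha> = 1" using 1 by simp
        have "\<rho>*\<mu> < 1"
        proof (rule ccontr)
          assume "\<not> \<rho>*\<mu> < 1" then have "\<rho>*\<mu> = 1" using 1 by simp
          then have "2*\<alpha>*\<mu>*\<rho> = \<alpha>*(\<rho>*\<mu>) + \<mu>*(\<rho>*\<alpha>)" by (simp add: algebra_simps)
          then show False using h2 e \<open>\<rho>*\<mu> = 1\<close> by simp
        qed
        then show ?thesis using e sA sC by simp
      qed
    next
      case 2
      then have rp: "\<rho> > 0" using a by (metis less_trans mult_nonpos_nonneg not_le zero_less_one less_imp_le)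
      have m: "\<rho>*\<mu> < 1"
      proof (rule ccontr)
        assume "\<not> \<rho>*\<mu> < 1"
        then have "\<alpha> \<le> \<alpha>*(\<rho>*\<mu>)" "\<mu> < \<mu>*(\<rho>*\<alpha>)" using a 2 by simp_all
        moreover have "2*\<alpha>*\<mu>*\<rho> = \<alpha>*(\<rho>*\<mu>) + \<mu>*(\<rho>*\<alpha>)" by (simp add: algebra_simps)
        ultimately show False using h2 by linarith
      qed
      have am: "\<mu> < \<alpha>" using 2 m rp by (metis mult_less_cancel_left_pos less_trans)
      have "(1-\<rho>^2)*(\<alpha>-\<mu>)*(\<alpha>+\<mu>-2*\<rho>*\<alpha>*\<mu>) > 0"
        using D am h2 by (intro mult_pos_pos) (auto simp: mult_ac)
      moreover have "(1-\<rho>*\<alpha>)^2 = (\<rho>*\<alpha>-1)^2" by (simp add: power2_commute)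
      ultimately have "(\<rho>*\<alpha>-1)^2 * C < (1-\<rho>*\<mu>)^2 * A"
        using id2[of \<alpha> \<rho> \<mu>] unfolding A_def C_def by (simp add: mult.commute)
      then have "(\<rho>*\<alpha>-1) * sqrt C < (1-\<rho>*\<mu>) * sqrt A"
        using A C 2 m by (intro sq_less_lemma) auto
      then show ?thesis unfolding sA_def sC_def by (simp add: algebra_simps)
    next
      case 3
      then have rp: "\<rho> > 0" using a by (metis less_trans mult_nonpos_nonneg not_le zero_less_one less_imp_le)
      have m: "\<rho>*\<alpha> < 1"
      proof (rule ccontr)
        assume "\<not> \<rho>*\<alpha> < 1"
        then have "\<mu> \<le> \<mu>*(\<rho>*\<alpha>)" "\<alpha> < \<alpha>*(\<rho>*\<mu>)" using a 3 by simp_all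
        moreover have "2*\<alpha>*\<mu>*\<rho> = \<alpha>*(\<rho>*\<mu>) + \<mu>*(\<rho>*\<alpha>)" by (simp add: algebra_simps)
        ultimately show False using h2 by linarith
      qed
      have am: "\<alpha> < \<mu>" using 3 m rp by (metis mult_less_cancel_left_pos less_trans)
      have "(1-\<rho>^2)*(\<mu>-\<alpha>)*(\<alpha>+\<mu>-2*\<rho>*\<alpha>*\<mu>) > 0"
        using D am h2 by (intro mult_pos_pos) (auto simp: mult_ac)
      moreover have "(1-\<rho>*\<mu>)^2 = (\<rho>*\<mu>-1)^2" by (simp add: power2_commute)
      ultimately have "(\<rho>*\<mu>-1)^2 * A < (1-\<rho>*\<alpha>)^2 * C"
        using id2[of \<alpha> \<rho> \<mu>] unfolding A_def C_def by (simp add: mult.commute algebra_simps)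
      then have "(\<rho>*\<mu>-1) * sqrt A < (1-\<rho>*\<alpha>) * sqrt C"
        using A C 3 m by (intro sq_less_lemma) auto
      then show ?thesis unfolding sA_def sC_def by (simp add: algebra_simps)
    qed
  qed
  moreover have "sC * ((1+T) - \<rho>*(\<alpha>+\<mu>*T)) = sC * (1 - \<rho>*\<alpha>) + (sC * T) * (1 - \<rho>*\<mu>)"
    by (simp add: algebra_simps)
  moreover have "sC * T = sA" using Te sC by simp
  ultimately have "sC * ((1+T) - \<rho>*(\<alpha>+\<mu>*T)) > 0" by simp
  then show "(1+T) - \<rho>*(\<alpha>+\<mu>*T) > 0" using sC by (simp add: zero_less_mult_iff)
qed


lemma caseR1:
  assumes r: "-1 < \<rho>" "\<rho> < 1" and a: "0 < \<alpha>" "0 < \<mu>"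
    and h1: "2*\<rho> < \<alpha> + \<mu>" and h2: "2*\<alpha>*\<mu>*\<rho> < \<alpha> + \<mu>"
  shows "t0 \<rho> \<alpha> \<mu> = t00 \<rho> \<alpha> \<mu> \<and> Iset \<rho> \<alpha> \<mu> = UNIV \<and> Kset \<rho> \<alpha> \<mu> = {} \<and>
         ghat \<rho> \<alpha> \<mu> = g0 \<rho> \<alpha> \<mu> (t00 \<rho> \<alpha> \<mu>) \<and>
         gtilde \<rho> \<alpha> \<mu> = deriv (deriv (g0 \<rho> \<alpha> \<mu>)) (t00 \<rho> \<alpha> \<mu>)"
proof -
  have ab: "\<bar>\<rho>\<bar> < 1" using r by auto
  define A where "A = 1 + \<alpha>^2 - 2*\<alpha>*\<rho>"
  define C where "C = 1 + \<mu>^2 - 2*\<mu>*\<rho>"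
  define B where "B = 1 + \<alpha>*\<mu> - \<rho>*\<alpha> - \<rho>*\<mu>"
  define T where "T = t00 \<rho> \<alpha> \<mu>"
  define D where "D = 1 - \<rho>^2"
  have TT: "T = sqrt (A / C)" unfolding T_def A_def C_def t00_def ..
  note U = upos[OF r a h1 h2, folded A_def C_def, folded TT]
  have A: "A > 0" and C: "C > 0" and T: "T > 0" and CT: "C * T^2 = A" using U by auto
  define p1 where "p1 = 1 + T"
  define p2 where "p2 = \<alpha> + \<mu> * T"
  define u1 where "u1 = p1 - \<rho> * p2"
  define u2 where "u2 = p2 - \<rho> * p1"
  have u1: "u1 > 0" and u2: "u2 > 0" using U unfolding u1_def u2_def p1_def p2_def by auto
  have D: "D > 0" unfolding D_def by (rule rho_sq[OF r])
  define m where "m = u1 + \<mu> * u2"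
  define G where "G = 2 * m / D"
  have QfE: "Qf \<rho> x1 x2 = G * t + 2 * (u1 * (x1 - (1+t)) + u2 * (x2 - (\<alpha> + \<mu> * t))) / D
       + Qf \<rho> (x1 - p1) (x2 - p2)" for x1 x2 t
  proof -
    have "x1^2 - 2*\<rho>*x1*x2 + x2^2 = 2 * t * m + 2 * (u1 * (x1 - (1+t)) + u2 * (x2 - (\<alpha> + \<mu> * t)))
      + ((x1-p1)^2 - 2*\<rho>*(x1-p1)*(x2-p2) + (x2-p2)^2)"
      using P_ident[where \<rho>=\<rho> and yy=x1 and zz=x2 and t=t and \<alpha>=\<alpha> and \<mu>=\<mu> and T=T] CT
      unfolding m_def u1_def u2_def p1_def p2_def A_def C_def by simp
    then show ?thesis unfolding Qf_def G_def D_def[symmetric] using D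
      by (simp add: add_divide_distrib)
  qed
  have Qz: "0 \<le> Qf \<rho> a c" for a c using Qf_ge1[OF r, of a c] by (meson order_trans zero_le_power2)
  have low: "G * t \<le> Qf \<rho> x1 x2" if "1 + t \<le> x1" "\<alpha> + \<mu> * t \<le> x2" for x1 x2 t
  proof -
    have "0 \<le> 2 * (u1 * (x1 - (1+t)) + u2 * (x2 - (\<alpha> + \<mu> * t))) / D"
      using that u1 u2 D by (intro divide_nonneg_pos) auto
    then show ?thesis using QfE[of x1 x2 t] Qz[of "x1-p1" "x2-p2"] by linarith
  qed
  have QpE: "Qf \<rho> p1 p2 = G * T" using QfE[of p1 p2 T] unfolding p1_def p2_def by (simp add: Qf_def)
  have VT: "Vb \<rho> (1+T) (\<alpha> + \<mu> * T) = G * T"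
  proof (rule antisym)
    show "Vb \<rho> (1+T) (\<alpha> + \<mu> * T) \<le> G * T" using Vb_upper[OF r, of "1+T" p1 "\<alpha> + \<mu> * T" p2] QpE
      unfolding p1_def p2_def by simp
    show "G * T \<le> Vb \<rho> (1+T) (\<alpha> + \<mu> * T)" using low by (intro Vb_lower) auto
  qed
  have gT: "gfun \<rho> \<alpha> \<mu> T = G" using VT T by (simp add: gfun_Vb[OF r])
  have t0: "t0 \<rho> \<alpha> \<mu> = T"
  proof (rule t0_eqI[OF T])
    fix s :: real assume s: "s > 0" "s \<noteq> T"
    define \<delta> where "\<delta> = min ((s-T)^2/4) ((u1/D) * \<bar>s-T\<bar>)"
    have dpos: "\<delta> > 0" unfolding \<delta>_def using s u1 D by auto
    have "G * s + \<delta> \<le> Qf \<rho> x1 x2" if x: "1 + s \<le> x1" "\<alpha> + \<mu> * s \<le> x2" for x1 x2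
    proof -
      have "\<delta> \<le> ((x1 - (1+s)) + (s - T))^2 + 2 * (u1/D) * (x1 - (1+s))"
        unfolding \<delta>_def using x s u1 D by (intro min_bound) auto
      moreover have "((x1 - (1+s)) + (s - T))^2 \<le> Qf \<rho> (x1 - p1) (x2 - p2)"
        using Qf_ge1[OF r, of "x1-p1" "x2-p2"] unfolding p1_def by (simp add: algebra_simps)
      moreover have "2 * (u1/D) * (x1 - (1+s)) \<le> 2 * (u1 * (x1 - (1+s)) + u2 * (x2 - (\<alpha> + \<mu> * s))) / D"
      proof -
        have "u1 * (x1 - (1+s)) \<le> u1 * (x1 - (1+s)) + u2 * (x2 - (\<alpha> + \<mu> * s))"
          using u2 x by simp
        then show ?thesis using D by (simp add: divide_right_mono)
      qed
      ultimately show ?thesis using QfE[of x1 x2 s] by linarith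
    qed
    then have "G * s + \<delta> \<le> Vb \<rho> (1+s) (\<alpha> + \<mu> * s)" by (intro Vb_lower) auto
    then have "(G * s + \<delta>) / s \<le> gfun \<rho> \<alpha> \<mu> s" using s by (simp add: gfun_Vb[OF r] divide_right_mono)
    moreover have "(G * s + \<delta>) / s = G + \<delta> / s" using s by (simp add: field_simps)
    moreover have "\<delta> / s > 0" using dpos s by simp
    ultimately show "gfun \<rho> \<alpha> \<mu> T < gfun \<rho> \<alpha> \<mu> s" using gT by linarith
  qed
  have mB: "m = B + T * C" unfolding m_def u1_def u2_def p1_def p2_def B_def C_def by (simp add: algebra_simps power2_eq_square)
  have g0E: "g0 \<rho> \<alpha> \<mu> s = (A/D) / s + 2 * B / D + (C/D) * s" for s
    unfolding g0_def A_def B_def C_def D_def by (simp add: mult_ac)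
  have g0T: "g0 \<rho> \<alpha> \<mu> T = G"
  proof -
    have "A / T = C * T" using CT T by (simp add: field_simps power2_eq_square)
    then have "g0 \<rho> \<alpha> \<mu> T = (C * T + 2 * B + C * T) / D" using g0E[of T] D by (simp add: field_simps)
    also have "\<dots> = G" unfolding G_def mB by (simp add: algebra_simps)
    finally show ?thesis .
  qed
  have bv: "bvec \<alpha> \<mu> (t0 \<rho> \<alpha> \<mu>) = vec2 p1 p2" unfolding t0 bvec_def p1_def p2_def ..
  have bt: "btilde (Sig \<rho>) (vec2 p1 p2) = vec2 p1 p2"
  proof (rule btilde_eqI)
    show "feasible (vec2 p1 p2) (vec2 p1 p2)" by (simp add: feasible_def)
  next
    fix y assume "feasible (vec2 p1 p2) y"
    then have "1 + T \<le> y$1" "\<alpha> + \<mu> * T \<le> y$2" by (simp_all add: feasible_def forall_2 p1_def p2_def)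
    then show "qf (Sig \<rho>) (vec2 p1 p2) \<le> qf (Sig \<rho>) y" using low QpE by (simp add: qf_Sig[OF ab])
  next
    fix y assume y: "feasible (vec2 p1 p2) y" "qf (Sig \<rho>) y \<le> qf (Sig \<rho>) (vec2 p1 p2)"
    then have y1: "1 + T \<le> y$1" and y2: "\<alpha> + \<mu> * T \<le> y$2" by (simp_all add: feasible_def forall_2 p1_def p2_def)
    have le: "Qf \<rho> (y$1) (y$2) \<le> G * T" using y QpE by (simp add: qf_Sig[OF ab])
    have "0 \<le> 2 * (u1 * (y$1 - (1+T)) + u2 * (y$2 - (\<alpha> + \<mu> * T))) / D"
      using y1 y2 u1 u2 D by (intro divide_nonneg_pos) auto
    then have "Qf \<rho> (y$1 - p1) (y$2 - p2) \<le> 0" using QfE[of "y$1" "y$2" T] le by linarith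
    then have "(y$1 - p1)^2 \<le> 0" "(y$2 - p2)^2 \<le> 0"
      using Qf_ge1[OF r, of "y$1 - p1" "y$2 - p2"] Qf_ge2[OF r, where a="y$1 - p1" and c="y$2 - p2"] by linarith+
    then have "y$1 = p1" "y$2 = p2" by simp_all
    then show "y = vec2 p1 p2" by (simp add: vec_eq_iff forall_2)
  qed
  let ?b = "vec2 p1 p2"
  have c1: "ess_cond (Sig \<rho>) ?b UNIV"
    unfolding ess_cond_def using u1 u2 D by (simp add: bt subinv_U Sinv_mult[OF r] forall_2 D_def[symmetric] u1_def u2_def)
  have ess: "ess (Sig \<rho>) ?b = UNIV"
  proof (rule ess_eqI[OF c1])
    fix J assume J: "ess_cond (Sig \<rho>) ?b J"
    have "J \<noteq> {}" using J by (simp add: ess_cond_def)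
    moreover have "J \<noteq> {1}"
    proof
      assume "J = {1}"
      then have e: "ess_cond (Sig \<rho>) ?b {1}" using J by simp
      have "\<forall>j\<in>-{1}. btilde (Sig \<rho>) ?b $ j = (\<Sum>k\<in>{1}. Sig \<rho> $ j $ k * subinv (Sig \<rho>) {1} ?b k)"
        using e unfolding ess_cond_def by blast
      then have "btilde (Sig \<rho>) ?b $ 2 = (\<Sum>k\<in>{1}. Sig \<rho> $ 2 $ k * subinv (Sig \<rho>) {1} ?b k)"
        by (simp add: compl1)
      then have "p2 = \<rho> * p1" by (simp add: bt subinv_1)
      then show False using u2 unfolding u2_def by simp
    qed
    moreover have "J \<noteq> {2}"
    proof
      assume "J = {2}"
      then have e: "ess_cond (Sig \<rho>) ?b {2}" using J by simp
      have "\<forall>j\<in>-{2}. btilde (Sig \<rho>) ?b $ j = (\<Sum>k\<in>{2}. Sig \<rho> $ j $ k * subinv (Sig \<rho>) {2} ?b k)"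
        using e unfolding ess_cond_def by blast
      then have "btilde (Sig \<rho>) ?b $ 1 = (\<Sum>k\<in>{2}. Sig \<rho> $ 1 $ k * subinv (Sig \<rho>) {2} ?b k)"
        by (simp add: compl2)
      then have "p1 = \<rho> * p2" by (simp add: bt subinv_2)
      then show False using u1 unfolding u1_def by simp
    qed
    ultimately show "J = UNIV" using sets2[of J] by blast
  qed
  have I: "Iset \<rho> \<alpha> \<mu> = UNIV" by (simp add: Iset_def bv ess)
  have K: "Kset \<rho> \<alpha> \<mu> = {}" by (simp add: Kset_def weak_ess_def bv ess)
  have gh: "ghat \<rho> \<alpha> \<mu> = g0 \<rho> \<alpha> \<mu> T" by (simp add: ghat_def t0 gT g0T)
  have dd: "deriv (deriv (g0 \<rho> \<alpha> \<mu>)) T = 2 * (A/D) / T^3"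
    by (rule deriv2_form[OF _ T]) (rule g0E)
  have "gtilde \<rho> \<alpha> \<mu> = 2 / T^3 * ((1 - \<rho>*\<alpha>)/D + \<alpha> * ((\<alpha> - \<rho>)/D))"
    by (simp add: gtilde_def I t0 sum_2 subinv_U Sinv_mult[OF r] D_def)
  also have "\<dots> = 2 * (A/D) / T^3" unfolding A_def using D T by (simp add: field_simps power2_eq_square)
  finally have gt: "gtilde \<rho> \<alpha> \<mu> = deriv (deriv (g0 \<rho> \<alpha> \<mu>)) T" using dd by simp
  show ?thesis using t0 I K gh gt unfolding T_def by blast
qed


lemma Apos: fixes \<rho> x :: real assumes "-1 < \<rho>" "\<rho> < 1" shows "1 + x^2 - 2*x*\<rho> > 0"
proof -
  have "1 + x^2 - 2*x*\<rho> = (1 - \<rho>^2) + (x - \<rho>)^2" by (simp add: algebra_simps power2_eq_square)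
  then show ?thesis using rho_sq[OF assms] by (metis add_pos_nonneg zero_le_power2)
qed

lemma g1_facts: "g1 t01 = 4" "deriv (deriv g1) t01 = 2"
proof -
  show "g1 t01 = 4" by (simp add: g1_def t01_def)
  have "deriv (deriv g1) 1 = 2 * 1 / 1^3"
    by (rule deriv2_form[where B=2 and C=1]) (auto simp: g1_def field_simps power2_eq_square)
  then show "deriv (deriv g1) t01 = 2" by (simp add: t01_def)
qed

lemma g2_facts: assumes "0 < \<alpha>" "0 < \<mu>"
  shows "g2 \<alpha> \<mu> (t02 \<alpha> \<mu>) = 4 * \<alpha> * \<mu>" "deriv (deriv (g2 \<alpha> \<mu>)) (t02 \<alpha> \<mu>) = 2 * \<mu> ^ 3 / \<alpha>"
proof -
  show "g2 \<alpha> \<mu> (t02 \<alpha> \<mu>) = 4 * \<alpha> * \<mu>" using assms by (simp add: g2_def t02_def field_simps power2_eq_square)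
  have "deriv (deriv (g2 \<alpha> \<mu>)) (\<alpha>/\<mu>) = 2 * \<alpha>^2 / (\<alpha>/\<mu>)^3"
    by (rule deriv2_form[where B="2*\<alpha>*\<mu>" and C="\<mu>^2"]) (use assms in \<open>auto simp: g2_def field_simps power2_eq_square\<close>)
  also have "\<dots> = 2 * \<mu> ^ 3 / \<alpha>" using assms by (simp add: field_simps power2_eq_square power3_eq_cube)
  finally show "deriv (deriv (g2 \<alpha> \<mu>)) (t02 \<alpha> \<mu>) = 2 * \<mu> ^ 3 / \<alpha>" by (simp add: t02_def)
qed

lemma g0_alt: "g0 \<rho> \<alpha> \<mu> t = ((1 + \<alpha>^2 - 2*\<alpha>*\<rho>) * (1/t) + 2 * (1 + \<alpha>*\<mu> - \<rho>*\<alpha> - \<rho>*\<mu>) + (1 + \<mu>^2 - 2*\<rho>*\<mu>) * t) / (1 - \<rho>^2)"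
  unfolding g0_def by (simp add: add_divide_distrib)

lemma R2i_facts:
  assumes r: "-1 < \<rho>" "\<rho> < 1" and a: "0 < \<alpha>" "0 < \<mu>" and e: "\<alpha> + \<mu> = 2 * \<rho>"
  shows "t00 \<rho> \<alpha> \<mu> = 1" "g0 \<rho> \<alpha> \<mu> 1 = 4"
proof -
  have me: "\<mu> = 2*\<rho> - \<alpha>" using e by simp
  have A: "1 + \<alpha>^2 - 2*\<alpha>*\<rho> > 0" by (rule Apos[OF r])
  have "1 + \<mu>^2 - 2*\<mu>*\<rho> = 1 + \<alpha>^2 - 2*\<alpha>*\<rho>" unfolding me by (simp add: algebra_simps power2_eq_square)
  then show "t00 \<rho> \<alpha> \<mu> = 1" using A by (simp add: t00_def)
  have D: "1 - \<rho>^2 \<noteq> 0" using rho_sq[OF r] by simp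
  have "g0 \<rho> \<alpha> \<mu> 1 = ((1 + \<alpha>^2 - 2*\<alpha>*\<rho>) + 2 * (1 + \<alpha>*\<mu> - \<rho>*\<alpha> - \<rho>*\<mu>) + (1 + \<mu>^2 - 2*\<rho>*\<mu>)) / (1 - \<rho>^2)"
    by (simp add: g0_alt)
  also have "\<dots> = (4 * (1 - \<rho>^2)) / (1 - \<rho>^2)" unfolding me by (simp add: algebra_simps power2_eq_square)
  also have "\<dots> = 4" by (rule nonzero_mult_div_cancel_right[OF D])
  finally show "g0 \<rho> \<alpha> \<mu> 1 = 4" .
qed

lemma R2ii_facts:
  assumes r: "-1 < \<rho>" "\<rho> < 1" and a: "0 < \<alpha>" "0 < \<mu>" and e: "\<alpha> + \<mu> = 2 * \<alpha> * \<mu> * \<rho>"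
  shows "t00 \<rho> \<alpha> \<mu> = \<alpha> / \<mu>" "g0 \<rho> \<alpha> \<mu> (\<alpha> / \<mu>) = 4 * \<alpha> * \<mu>"
proof -
  define C where "C = 1 + \<mu>^2 - 2*\<mu>*\<rho>"
  define A where "A = 1 + \<alpha>^2 - 2*\<alpha>*\<rho>"
  have C: "C > 0" unfolding C_def by (rule Apos[OF r])
  have e1: "2*\<alpha>*\<rho> = 1 + \<alpha>/\<mu>" using e a by (simp add: field_simps)
  have e2: "2*\<mu>*\<rho> = 1 + \<mu>/\<alpha>" using e a by (simp add: field_simps)
  have Ae: "A = \<alpha>^2 - \<alpha>/\<mu>" unfolding A_def using e1 by simp
  have Ce: "C = \<mu>^2 - \<mu>/\<alpha>" unfolding C_def using e2 by simp
  have AC: "A = (\<alpha>/\<mu>)^2 * C" unfolding Ae Ce using a by (simp add: field_simps power2_eq_square)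
  have "t00 \<rho> \<alpha> \<mu> = sqrt (A / C)" unfolding t00_def A_def C_def ..
  also have "\<dots> = \<alpha> / \<mu>" using AC C a by simp
  finally show "t00 \<rho> \<alpha> \<mu> = \<alpha> / \<mu>" .
  have D: "1 - \<rho>^2 > 0" by (rule rho_sq[OF r])
  have t1: "A * (\<mu>/\<alpha>) = \<alpha>*\<mu> - 1" unfolding Ae using a by (simp add: field_simps power2_eq_square)
  have t2: "C * (\<alpha>/\<mu>) = \<alpha>*\<mu> - 1" unfolding Ce using a by (simp add: field_simps power2_eq_square)
  have t3: "\<rho>*(\<alpha>+\<mu>) = 2*\<alpha>*\<mu>*\<rho>^2" unfolding e by (simp add: power2_eq_square)
  have "g0 \<rho> \<alpha> \<mu> (\<alpha> / \<mu>) = (A * (\<mu>/\<alpha>) + 2 * (1 + \<alpha>*\<mu> - \<rho>*(\<alpha>+\<mu>)) + C * (\<alpha>/\<mu>)) / (1 - \<rho>^2)"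
    unfolding g0_alt A_def C_def using a by (simp add: algebra_simps)
  also have "\<dots> = (4*\<alpha>*\<mu> * (1 - \<rho>^2)) / (1 - \<rho>^2)" unfolding t1 t2 t3 by (simp add: algebra_simps)
  also have "\<dots> = 4*\<alpha>*\<mu>" by (rule nonzero_mult_div_cancel_right) (use D in simp)
  finally show "g0 \<rho> \<alpha> \<mu> (\<alpha> / \<mu>) = 4 * \<alpha> * \<mu>" .
qed

theorem corollary6p3:
  fixes \<rho> \<alpha> \<mu> :: real
  assumes "-1 < \<rho>" "\<rho> < 1" "0 < \<alpha>" "0 < \<mu>"
  shows
   "(((\<mu> < 1 \<and> \<alpha> < 1) \<or> (\<mu> < 1 \<and> \<alpha> \<ge> 1 \<and> \<mu> \<le> 1/\<alpha>) \<or> (\<mu> \<ge> 1 \<and> \<alpha> < 1 \<and> \<mu> \<le> 1/\<alpha>)) \<longrightarrow>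
      ((\<rho> < (\<alpha> + \<mu>) / 2 \<longrightarrow>
          t0 \<rho> \<alpha> \<mu> = t00 \<rho> \<alpha> \<mu> \<and> Iset \<rho> \<alpha> \<mu> = {1, 2} \<and> Kset \<rho> \<alpha> \<mu> = {} \<and>
          ghat \<rho> \<alpha> \<mu> = g0 \<rho> \<alpha> \<mu> (t00 \<rho> \<alpha> \<mu>) \<and>
          gtilde \<rho> \<alpha> \<mu> = deriv (deriv (g0 \<rho> \<alpha> \<mu>)) (t00 \<rho> \<alpha> \<mu>)) \<and>
       (\<rho> = (\<alpha> + \<mu>) / 2 \<longrightarrow>
          t0 \<rho> \<alpha> \<mu> = t00 \<rho> \<alpha> \<mu> \<and> t00 \<rho> \<alpha> \<mu> = t01 \<and> Iset \<rho> \<alpha> \<mu> = {1} \<and> Kset \<rho> \<alpha> \<mu> = {2} \<and>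
          ghat \<rho> \<alpha> \<mu> = g0 \<rho> \<alpha> \<mu> (t00 \<rho> \<alpha> \<mu>) \<and> g0 \<rho> \<alpha> \<mu> (t00 \<rho> \<alpha> \<mu>) = g1 t01 \<and> g1 t01 = 4 \<and>
          gtilde \<rho> \<alpha> \<mu> = deriv (deriv g1) t01 \<and> deriv (deriv g1) t01 = 2) \<and>
       ((\<alpha> + \<mu>) / 2 < \<rho> \<longrightarrow>
          t0 \<rho> \<alpha> \<mu> = t01 \<and> Iset \<rho> \<alpha> \<mu> = {1} \<and> Kset \<rho> \<alpha> \<mu> = {} \<and>
          ghat \<rho> \<alpha> \<mu> = g1 t01 \<and> g1 t01 = 4 \<and>
          gtilde \<rho> \<alpha> \<mu> = deriv (deriv g1) t01 \<and> deriv (deriv g1) t01 = 2))) \<and>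
    (((\<mu> \<ge> 1 \<and> \<alpha> \<ge> 1) \<or> (\<mu> < 1 \<and> \<alpha> \<ge> 1 \<and> \<mu> > 1/\<alpha>) \<or> (\<mu> \<ge> 1 \<and> \<alpha> < 1 \<and> \<mu> > 1/\<alpha>)) \<longrightarrow>
      ((\<rho> < (\<alpha> + \<mu>) / (2 * \<alpha> * \<mu>) \<longrightarrow>
          t0 \<rho> \<alpha> \<mu> = t00 \<rho> \<alpha> \<mu> \<and> Iset \<rho> \<alpha> \<mu> = {1, 2} \<and> Kset \<rho> \<alpha> \<mu> = {} \<and>
          ghat \<rho> \<alpha> \<mu> = g0 \<rho> \<alpha> \<mu> (t00 \<rho> \<alpha> \<mu>) \<and>
          gtilde \<rho> \<alpha> \<mu> = deriv (deriv (g0 \<rho> \<alpha> \<mu>)) (t00 \<rho> \<alpha> \<mu>)) \<and>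
       (\<rho> = (\<alpha> + \<mu>) / (2 * \<alpha> * \<mu>) \<longrightarrow>
          t0 \<rho> \<alpha> \<mu> = t00 \<rho> \<alpha> \<mu> \<and> t00 \<rho> \<alpha> \<mu> = t02 \<alpha> \<mu> \<and> Iset \<rho> \<alpha> \<mu> = {2} \<and> Kset \<rho> \<alpha> \<mu> = {1} \<and>
          ghat \<rho> \<alpha> \<mu> = g0 \<rho> \<alpha> \<mu> (t00 \<rho> \<alpha> \<mu>) \<and> g0 \<rho> \<alpha> \<mu> (t00 \<rho> \<alpha> \<mu>) = g2 \<alpha> \<mu> (t02 \<alpha> \<mu>) \<and>
          g2 \<alpha> \<mu> (t02 \<alpha> \<mu>) = 4 * \<alpha> * \<mu> \<and>
          gtilde \<rho> \<alpha> \<mu> = deriv (deriv (g2 \<alpha> \<mu>)) (t02 \<alpha> \<mu>) \<and>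
          deriv (deriv (g2 \<alpha> \<mu>)) (t02 \<alpha> \<mu>) = 2 * \<mu> ^ 3 / \<alpha>) \<and>
       ((\<alpha> + \<mu>) / (2 * \<alpha> * \<mu>) < \<rho> \<longrightarrow>
          t0 \<rho> \<alpha> \<mu> = t02 \<alpha> \<mu> \<and> Iset \<rho> \<alpha> \<mu> = {2} \<and> Kset \<rho> \<alpha> \<mu> = {} \<and>
          ghat \<rho> \<alpha> \<mu> = g2 \<alpha> \<mu> (t02 \<alpha> \<mu>) \<and> g2 \<alpha> \<mu> (t02 \<alpha> \<mu>) = 4 * \<alpha> * \<mu> \<and>
          gtilde \<rho> \<alpha> \<mu> = deriv (deriv (g2 \<alpha> \<mu>)) (t02 \<alpha> \<mu>) \<and>
          deriv (deriv (g2 \<alpha> \<mu>)) (t02 \<alpha> \<mu>) = 2 * \<mu> ^ 3 / \<alpha>)))"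
proof -
  note r = assms(1,2) and a = assms(3,4)
  have pa: "0 < \<alpha> * \<mu>" using a by simp
  have u12: "{1, 2::2} = UNIV" by (rule univ12)
  have H1: "t0 \<rho> \<alpha> \<mu> = t00 \<rho> \<alpha> \<mu> \<and> Iset \<rho> \<alpha> \<mu> = {1, 2} \<and> Kset \<rho> \<alpha> \<mu> = {} \<and>
          ghat \<rho> \<alpha> \<mu> = g0 \<rho> \<alpha> \<mu> (t00 \<rho> \<alpha> \<mu>) \<and>
          gtilde \<rho> \<alpha> \<mu> = deriv (deriv (g0 \<rho> \<alpha> \<mu>)) (t00 \<rho> \<alpha> \<mu>)"
    if h1: "2*\<rho> < \<alpha> + \<mu>" and h2: "2*\<alpha>*\<mu>*\<rho> < \<alpha> + \<mu>"
    using caseR1[OF r a h1 h2] u12 by simp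
  have H2: "t0 \<rho> \<alpha> \<mu> = t00 \<rho> \<alpha> \<mu> \<and> t00 \<rho> \<alpha> \<mu> = t01 \<and> Iset \<rho> \<alpha> \<mu> = {1} \<and> Kset \<rho> \<alpha> \<mu> = {2} \<and>
          ghat \<rho> \<alpha> \<mu> = g0 \<rho> \<alpha> \<mu> (t00 \<rho> \<alpha> \<mu>) \<and> g0 \<rho> \<alpha> \<mu> (t00 \<rho> \<alpha> \<mu>) = g1 t01 \<and> g1 t01 = 4 \<and>
          gtilde \<rho> \<alpha> \<mu> = deriv (deriv g1) t01 \<and> deriv (deriv g1) t01 = 2"
    if e: "\<rho> = (\<alpha> + \<mu>) / 2"
  proof -
    have e': "\<alpha> + \<mu> = 2 * \<rho>" using e by simp
    note C = case1[OF r a, of] R2i_facts[OF r a e'] g1_facts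
    show ?thesis using C e' by (simp add: t01_def)
  qed
  have H3: "t0 \<rho> \<alpha> \<mu> = t01 \<and> Iset \<rho> \<alpha> \<mu> = {1} \<and> Kset \<rho> \<alpha> \<mu> = {} \<and>
          ghat \<rho> \<alpha> \<mu> = g1 t01 \<and> g1 t01 = 4 \<and>
          gtilde \<rho> \<alpha> \<mu> = deriv (deriv g1) t01 \<and> deriv (deriv g1) t01 = 2"
    if e: "(\<alpha> + \<mu>) / 2 < \<rho>"
  proof -
    have e': "\<alpha> + \<mu> < 2 * \<rho>" using e by simp
    note C = case1[OF r a] g1_facts
    show ?thesis using C e' by (simp add: t01_def)
  qed
  have H4: "t0 \<rho> \<alpha> \<mu> = t00 \<rho> \<alpha> \<mu> \<and> t00 \<rho> \<alpha> \<mu> = t02 \<alpha> \<mu> \<and> Iset \<rho> \<alpha> \<mu> = {2} \<and> Kset \<rho> \<alpha> \<mu> = {1} \<and>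
          ghat \<rho> \<alpha> \<mu> = g0 \<rho> \<alpha> \<mu> (t00 \<rho> \<alpha> \<mu>) \<and> g0 \<rho> \<alpha> \<mu> (t00 \<rho> \<alpha> \<mu>) = g2 \<alpha> \<mu> (t02 \<alpha> \<mu>) \<and>
          g2 \<alpha> \<mu> (t02 \<alpha> \<mu>) = 4 * \<alpha> * \<mu> \<and>
          gtilde \<rho> \<alpha> \<mu> = deriv (deriv (g2 \<alpha> \<mu>)) (t02 \<alpha> \<mu>) \<and>
          deriv (deriv (g2 \<alpha> \<mu>)) (t02 \<alpha> \<mu>) = 2 * \<mu> ^ 3 / \<alpha>"
    if e: "\<rho> = (\<alpha> + \<mu>) / (2 * \<alpha> * \<mu>)"
  proof -
    have e': "\<alpha> + \<mu> = 2 * \<alpha> * \<mu> * \<rho>" using e a by (simp add: field_simps)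
    note C = case2[OF r a] R2ii_facts[OF r a e'] g2_facts[OF a]
    show ?thesis using C e' by (simp add: t02_def)
  qed
  have H5: "t0 \<rho> \<alpha> \<mu> = t02 \<alpha> \<mu> \<and> Iset \<rho> \<alpha> \<mu> = {2} \<and> Kset \<rho> \<alpha> \<mu> = {} \<and>
          ghat \<rho> \<alpha> \<mu> = g2 \<alpha> \<mu> (t02 \<alpha> \<mu>) \<and> g2 \<alpha> \<mu> (t02 \<alpha> \<mu>) = 4 * \<alpha> * \<mu> \<and>
          gtilde \<rho> \<alpha> \<mu> = deriv (deriv (g2 \<alpha> \<mu>)) (t02 \<alpha> \<mu>) \<and>
          deriv (deriv (g2 \<alpha> \<mu>)) (t02 \<alpha> \<mu>) = 2 * \<mu> ^ 3 / \<alpha>"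
    if e: "(\<alpha> + \<mu>) / (2 * \<alpha> * \<mu>) < \<rho>"
  proof -
    have e': "\<alpha> + \<mu> < 2 * \<alpha> * \<mu> * \<rho>" using e a by (simp add: field_simps)
    note C = case2[OF r a] g2_facts[OF a]
    show ?thesis using C e' by (simp add: t02_def)
  qed
  have cI: "\<alpha> * \<mu> \<le> 1" if "(\<mu> < 1 \<and> \<alpha> < 1) \<or> (\<mu> < 1 \<and> \<alpha> \<ge> 1 \<and> \<mu> \<le> 1/\<alpha>) \<or> (\<mu> \<ge> 1 \<and> \<alpha> < 1 \<and> \<mu> \<le> 1/\<alpha>)"
  proof -
    have "\<mu> \<le> 1/\<alpha>" using that a
      by (metis less_eq_real_def le_divide_eq_1_pos mult_less_cancel_right1 order.strict_trans)
    then show ?thesis using a by (simp add: field_simps mult.commute)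
  qed
  have cII: "1 \<le> \<alpha> * \<mu>" if "(\<mu> \<ge> 1 \<and> \<alpha> \<ge> 1) \<or> (\<mu> < 1 \<and> \<alpha> \<ge> 1 \<and> \<mu> > 1/\<alpha>) \<or> (\<mu> \<ge> 1 \<and> \<alpha> < 1 \<and> \<mu> > 1/\<alpha>)"
  proof -
    have "\<mu> \<ge> 1/\<alpha>" using that a
      by (metis less_eq_real_def divide_le_eq_1_pos mult_le_cancel_right1 order.trans less_imp_le)
    then show ?thesis using a by (simp add: field_simps mult.commute)
  qed
  have R1a: "2*\<alpha>*\<mu>*\<rho> < \<alpha> + \<mu>" if "\<alpha> * \<mu> \<le> 1" "2*\<rho> < \<alpha> + \<mu>"
  proof (cases "\<rho> \<le> 0")
    case True then have "(\<alpha>*\<mu>)*\<rho> \<le> 0" using pa by (simp add: mult_nonneg_nonpos)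
    moreover have "2*\<alpha>*\<mu>*\<rho> = 2*((\<alpha>*\<mu>)*\<rho>)" by (simp add: mult_ac)
    ultimately show ?thesis using a by linarith
  next
    case False then have "(\<alpha>*\<mu>)*\<rho> \<le> 1*\<rho>" using that by (intro mult_right_mono) auto
    then show ?thesis using that by (simp add: mult_ac)
  qed
  have R1b: "2*\<rho> < \<alpha> + \<mu>" if "1 \<le> \<alpha> * \<mu>" "2*\<alpha>*\<mu>*\<rho> < \<alpha> + \<mu>"
  proof (cases "\<rho> \<le> 0")
    case True then show ?thesis using a by linarith
  next
    case False then have "1*\<rho> \<le> (\<alpha>*\<mu>)*\<rho>" using that by (intro mult_right_mono) auto
    then show ?thesis using that by (simp add: mult_ac)
  qed
  have G1: "2*\<rho> < \<alpha> + \<mu>" if "\<rho> < (\<alpha> + \<mu>) / 2" using that by simp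
  have G2: "2*\<alpha>*\<mu>*\<rho> < \<alpha> + \<mu>" if "\<rho> < (\<alpha> + \<mu>) / (2 * \<alpha> * \<mu>)"
    using that a by (simp add: field_simps)
  have J1: "2*\<rho> < \<alpha> + \<mu> \<and> 2*\<alpha>*\<mu>*\<rho> < \<alpha> + \<mu>"
    if "(\<mu> < 1 \<and> \<alpha> < 1) \<or> (\<mu> < 1 \<and> \<alpha> \<ge> 1 \<and> \<mu> \<le> 1/\<alpha>) \<or> (\<mu> \<ge> 1 \<and> \<alpha> < 1 \<and> \<mu> \<le> 1/\<alpha>)"
       "\<rho> < (\<alpha> + \<mu>) / 2"
    using R1a[OF cI[OF that(1)] G1[OF that(2)]] G1[OF that(2)] by blast
  have J2: "2*\<rho> < \<alpha> + \<mu> \<and> 2*\<alpha>*\<mu>*\<rho> < \<alpha> + \<mu>"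
    if "(\<mu> \<ge> 1 \<and> \<alpha> \<ge> 1) \<or> (\<mu> < 1 \<and> \<alpha> \<ge> 1 \<and> \<mu> > 1/\<alpha>) \<or> (\<mu> \<ge> 1 \<and> \<alpha> < 1 \<and> \<mu> > 1/\<alpha>)"
       "\<rho> < (\<alpha> + \<mu>) / (2 * \<alpha> * \<mu>)"
    using R1b[OF cII[OF that(1)] G2[OF that(2)]] G2[OF that(2)] by blast
  show ?thesis
    apply (rule conjI)
     apply (rule impI)
     apply (rule conjI)
      apply (rule impI)
      apply (rule H1)
       apply (metis J1)
      apply (metis J1)
     apply (rule conjI)
      apply (rule impI, erule H2)
     apply (rule impI, erule H3)
    apply (rule impI)
    apply (rule conjI)
     apply (rule impI)
     apply (rule H1)
      apply (metis J2)
     apply (metis J2)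
    apply (rule conjI)
     apply (rule impI, erule H4)
    apply (rule impI, erule H5)
    done
qed

end
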